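(* Let $n\in\mathbb N$ and let $f$ be extremal for $M_n$ with $N$ atoms. If there exists a holomorphic $\psi:\mathbb D\to\mathbb D$ with $\psi\ne\mathrm{id}$, $\psi(0)=0$ and $f\circ\psi=f$, then $\psi$ is a rotation $z\mapsto\xi z$ ($\xi\in\partial\mathbb D$) and $\gcd(N,n)>1$.
   Context: $\mathbb D$ is the open unit disc; $\mathcal B_0=\{f$ holomorphic on $\mathbb D: 0<|f|\le1\}$; $M_n(f)=\mathrm{Re}\,a_n$ for $f=\sum a_jz^j$; $f\in\mathcal B_0$ is extremal for $M_n$ if $M_n(f)\ge M_n(F)$ for all $F\in\mathcal B_0$. It is known that every extremal $f$ can be written as $f(z)=\gamma\exp\big(-\sum_{j=1}^N\lambda_j\frac{1+\alpha_jz}{1-\alpha_jz}\big)$ with $\gamma\in\partial\mathbb D$, $1\le N\le n$, $\lambda_j>0$, distinct $\alpha_j\in\partial\mathbb D$; $N$ is the number of atoms. *)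

theory Defs
  imports "HOL-Complex_Analysis.Complex_Analysis"
begin

definition B0 :: "(complex \<Rightarrow> complex) set" where
  "B0 = {f. f holomorphic_on ball 0 1 \<and>
            (\<forall>z\<in>ball 0 1. 0 < norm (f z) \<and> norm (f z) \<le> 1)}"

definition taylor_coeff :: "(complex \<Rightarrow> complex) \<Rightarrow> nat \<Rightarrow> complex" where
  "taylor_coeff f n = (deriv ^^ n) f 0 / of_nat (fact n)"

definition M :: "nat \<Rightarrow> (complex \<Rightarrow> complex) \<Rightarrow> real" where
  "M n f = Re (taylor_coeff f n)"

definition extremal :: "nat \<Rightarrow> (complex \<Rightarrow> complex) \<Rightarrow> bool" where
  "extremal n f \<longleftrightarrow> f \<in> B0 \<and> (\<forall>F\<in>B0. M n F \<le> M n f)"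

definition has_atoms :: "(complex \<Rightarrow> complex) \<Rightarrow> nat \<Rightarrow> bool" where
  "has_atoms f N \<longleftrightarrow> 1 \<le> N \<and>
     (\<exists>\<gamma> (lam :: nat \<Rightarrow> real) (\<alpha> :: nat \<Rightarrow> complex).
        norm \<gamma> = 1 \<and> (\<forall>j<N. lam j > 0 \<and> norm (\<alpha> j) = 1) \<and> inj_on \<alpha> {..<N} \<and>
        (\<forall>z\<in>ball 0 1. f z = \<gamma> * exp (- (\<Sum>j<N. of_real (lam j) *
              ((1 + \<alpha> j * z) / (1 - \<alpha> j * z))))))"

end

theory Submission
  imports Defs "HOL-Real_Asymp.Real_Asymp"
begin


lemma F_deriv:
  assumes "n \<ge> 1"
  shows "(deriv ^^ n) (\<lambda>z::complex. (1 + z^n)/2) 0 = fact n / 2"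
proof -
  have e: "(\<lambda>z::complex. (1 + z^n)/2) = (\<lambda>z. (1/2) * ((\<lambda>w. 1) z + (\<lambda>w. (w - 0)^n) z))"
    by (auto simp: field_simps)
  have "(deriv ^^ n) (\<lambda>z::complex. (1/2) * ((\<lambda>w. 1) z + (\<lambda>w. (w - 0)^n) z)) 0
      = (1/2) * (deriv ^^ n) (\<lambda>z. (\<lambda>w. 1) z + (\<lambda>w. (w - 0)^n) z) 0"
    by (rule higher_deriv_cmult[where A=UNIV]) (auto intro!: holomorphic_intros)
  also have "(deriv ^^ n) (\<lambda>z::complex. (\<lambda>w. 1) z + (\<lambda>w. (w - 0)^n) z) 0
      = (deriv ^^ n) (\<lambda>w. 1) 0 + (deriv ^^ n) (\<lambda>w. (w - 0)^n) 0"
    by (rule higher_deriv_add[where S=UNIV]) (auto intro!: holomorphic_intros)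
  also have "\<dots> = fact n"
    using assms higher_deriv_power[of n 0 n 0] by (simp add: pochhammer_fact)
  finally show ?thesis unfolding e by simp
qed

lemma F_B0:
  assumes "n \<ge> 1"
  shows "(\<lambda>z::complex. (1 + z^n)/2) \<in> B0" and "M n (\<lambda>z::complex. (1 + z^n)/2) = 1/2"
proof -
  show "M n (\<lambda>z::complex. (1 + z^n)/2) = 1/2"
    unfolding M_def taylor_coeff_def by (simp add: F_deriv[OF assms])
  show "(\<lambda>z::complex. (1 + z^n)/2) \<in> B0"
    unfolding B0_def
  proof (intro CollectI conjI ballI)
    show "(\<lambda>z::complex. (1 + z^n)/2) holomorphic_on ball 0 1"
      by (auto intro!: holomorphic_intros)
  next
    fix z :: complex assume z: "z \<in> ball 0 1"
    then have nz: "norm z < 1" by simp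
    have pn: "norm (z^n) < 1"
      using nz assms by (simp add: norm_power power_less_one_iff)
    have "1 + z^n \<noteq> 0"
    proof
      assume "1 + z^n = 0"
      then have "z^n = -1" by (simp add: add_eq_0_iff)
      then show False using pn by simp
    qed
    then show "0 < norm ((1 + z^n)/2)" by simp
    have "norm (1 + z^n) \<le> 1 + norm (z^n)" using norm_triangle_ineq[of 1 "z^n"] by simp
    then show "norm ((1 + z^n)/2) \<le> 1" using pn by (simp add: norm_divide)
  qed
qed



definition Sf :: "nat \<Rightarrow> (nat \<Rightarrow> real) \<Rightarrow> (nat \<Rightarrow> complex) \<Rightarrow> complex \<Rightarrow> complex" where
  "Sf N lam \<alpha> z = (\<Sum>j<N. of_real (lam j) * ((1 + \<alpha> j * z) / (1 - \<alpha> j * z)))"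

lemma Re_herglotz_nonneg:
  fixes u :: complex assumes "norm u < 1"
  shows "0 \<le> Re ((1 + u) / (1 - u))"
proof -
  have "(Re u)^2 + (Im u)^2 < 1"
    using assms by (simp add: cmod_def)
  then have "0 \<le> (1 + Re u) * (1 - Re u) + Im u * (- Im u)"
    by (simp add: power2_eq_square algebra_simps)
  then show ?thesis
    by (simp add: Re_divide)
qed

lemma Sf_lower:
  assumes k: "k < N" and lam: "\<forall>j<N. lam j > 0 \<and> norm (\<alpha> j) = 1"
    and t: "0 \<le> t" "t < 1"
  shows "lam k / (1 - t) \<le> Re (Sf N lam \<alpha> (of_real t * cnj (\<alpha> k)))"
proof -
  let ?g = "\<lambda>j. lam j * Re ((1 + \<alpha> j * (of_real t * cnj (\<alpha> k))) / (1 - \<alpha> j * (of_real t * cnj (\<alpha> k))))"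
  have Re: "Re (Sf N lam \<alpha> (of_real t * cnj (\<alpha> k))) = (\<Sum>j<N. ?g j)"
  proof -
    have r: "\<And>a w. Re (complex_of_real a * w) = a * Re w" by simp
    show ?thesis unfolding Sf_def Re_sum by (intro sum.cong refl) (simp only: r)
  qed
  have nn: "\<forall>j\<in>{..<N}. 0 \<le> ?g j"
  proof
    fix j assume "j \<in> {..<N}"
    then have "norm (\<alpha> j) = 1" "lam j > 0" "norm (\<alpha> k) = 1" using lam k by auto
    then have "norm (\<alpha> j * (of_real t * cnj (\<alpha> k))) < 1"
      using t by (simp add: norm_mult)
    then show "0 \<le> ?g j" using \<open>lam j > 0\<close> Re_herglotz_nonneg by simp
  qed
  have ak: "\<alpha> k * cnj (\<alpha> k) = 1"
    using lam k by (metis complex_norm_square mult.commute of_real_1 power_one)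
  have ev: "\<alpha> k * (of_real t * cnj (\<alpha> k)) = of_real t"
    using ak by (metis mult.left_commute mult.right_neutral)
  have "(1 + \<alpha> k * (of_real t * cnj (\<alpha> k))) / (1 - \<alpha> k * (of_real t * cnj (\<alpha> k)))
      = of_real ((1 + t) / (1 - t))" unfolding ev by simp
  then have gk: "?g k = lam k * ((1 + t) / (1 - t))"
    by (simp only: Re_complex_of_real)
  have "?g k \<le> (\<Sum>j<N. ?g j)"
    by (rule member_le_sum) (use nn k in auto)
  moreover have "lam k / (1 - t) \<le> lam k * ((1 + t) / (1 - t))"
  proof -
    have "lam k / (1 - t) \<le> (lam k * (1 + t)) / (1 - t)"
      by (rule divide_right_mono) (use t lam k in auto)
    then show ?thesis by simp
  qed
  ultimately show ?thesis using Re gk by linarith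
qed

lemma Sf_at_top:
  assumes k: "k < N" and lam: "\<forall>j<N. lam j > 0 \<and> norm (\<alpha> j) = 1"
  shows "filterlim (\<lambda>t. Re (Sf N lam \<alpha> (of_real t * cnj (\<alpha> k)))) at_top (at_left (1::real))"
proof (rule filterlim_at_top_mono)
  have "filterlim (\<lambda>t::real. 1 / (1 - t)) at_top (at_left 1)"
    by real_asymp
  then show "filterlim (\<lambda>t::real. lam k * (1 / (1 - t))) at_top (at_left 1)"
    using lam k by (intro filterlim_tendsto_pos_mult_at_top[OF tendsto_const]) auto
  have "eventually (\<lambda>t::real. 0 < t \<and> t < 1) (at_left 1)"
    by (auto simp: eventually_at_left_field intro!: exI[of _ 0])
  then show "eventually (\<lambda>t. lam k * (1 / (1 - t)) \<le> Re (Sf N lam \<alpha> (of_real t * cnj (\<alpha> k)))) (at_left 1)"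
    by eventually_elim (use Sf_lower[OF k lam] in auto)
qed

lemma Sf_cont:
  assumes "\<forall>j<N. \<alpha> j * \<beta> \<noteq> 1"
  shows "((\<lambda>t. Re (Sf N lam \<alpha> (of_real t * \<beta>))) \<longlongrightarrow> Re (Sf N lam \<alpha> \<beta>)) (at_left (1::real))"
proof -
  have "((\<lambda>t. Sf N lam \<alpha> (of_real t * \<beta>)) \<longlongrightarrow> Sf N lam \<alpha> (of_real 1 * \<beta>)) (at_left (1::real))"
    unfolding Sf_def using assms
    by (intro tendsto_intros) auto
  then show ?thesis by (intro tendsto_intros) simp
qed

lemma at_top_tendsto_False:
  assumes "filterlim g at_top F" "(g \<longlongrightarrow> (L::real)) F" "F \<noteq> bot"
  shows False
proof -
  have "eventually (\<lambda>t. g t > L + 1) F"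
    using assms(1) by (simp add: filterlim_at_top_dense)
  moreover have "eventually (\<lambda>t. g t < L + 1) F"
    using assms(2) by (rule order_tendstoD) simp
  ultimately have "eventually (\<lambda>t. False) F"
    by eventually_elim auto
  then show False using assms(3) by simp
qed



theorem corollary3:
  fixes n N :: nat and f \<psi> :: "complex \<Rightarrow> complex"
  assumes "extremal n f"
    and "has_atoms f N"
    and "\<psi> holomorphic_on ball 0 1"
    and "\<psi> ` ball 0 1 \<subseteq> ball 0 1"
    and "\<exists>z\<in>ball 0 1. \<psi> z \<noteq> z"
    and "\<psi> 0 = 0"
    and "\<forall>z\<in>ball 0 1. f (\<psi> z) = f z"
  shows "(\<exists>\<xi>. norm \<xi> = 1 \<and> (\<forall>z\<in>ball 0 1. \<psi> z = \<xi> * z)) \<and> gcd N n > 1"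
proof -
  obtain \<gamma> lam \<alpha> where g1: "norm \<gamma> = 1" and la: "\<forall>j<N. lam j > 0 \<and> norm (\<alpha> j) = 1"
    and inj: "inj_on \<alpha> {..<N}"
    and fz0: "\<forall>z\<in>ball 0 1. f z = \<gamma> * exp (- (\<Sum>j<N. of_real (lam j) *
              ((1 + \<alpha> j * z) / (1 - \<alpha> j * z))))"
    and N1: "1 \<le> N"
    using assms(2) unfolding has_atoms_def by blast
  have fz: "\<And>z. z \<in> ball 0 1 \<Longrightarrow> f z = \<gamma> * exp (- Sf N lam \<alpha> z)"
    using fz0 unfolding Sf_def by blast
  have nf: "\<And>z. z \<in> ball 0 1 \<Longrightarrow> norm (f z) = exp (- Re (Sf N lam \<alpha> z))"
    using fz g1 by (simp add: norm_mult)
  have fB0: "f \<in> B0" and ext: "\<And>F. F \<in> B0 \<Longrightarrow> M n F \<le> M n f"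
    using assms(1) unfolding extremal_def by auto
  have holf: "f holomorphic_on ball 0 1" and fpos: "\<And>z. z \<in> ball 0 1 \<Longrightarrow> 0 < norm (f z)"
    using fB0 unfolding B0_def by auto
  have evt: "eventually (\<lambda>t::real. 0 < t \<and> t < 1) (at_left 1)"
    by (auto simp: eventually_at_left_field intro!: exI[of _ 0])
  have K: "False" if "k < N" "((\<lambda>t. Re (Sf N lam \<alpha> (of_real t * cnj (\<alpha> k)))) \<longlongrightarrow> L) (at_left 1)" for k L
    using at_top_tendsto_False[OF Sf_at_top[OF that(1) la] that(2)] trivial_limit_at_left_real by blast
  have inball: "of_real t * w \<in> ball 0 1" if "0 < t" "t < 1" "norm w = 1" for t :: real and w :: complex
    using that by (simp add: norm_mult)
  have a0: "norm (\<alpha> 0) = 1" using la N1 by auto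
  have n1: "n \<ge> 1"
  proof (rule ccontr)
    assume "\<not> n \<ge> 1"
    then have n0: "n = 0" by simp
    have "(\<lambda>z. 1) \<in> B0" unfolding B0_def by auto
    then have "M 0 (\<lambda>z. 1) \<le> M 0 f" using ext n0 by blast
    then have "1 \<le> Re (f 0)" by (simp add: M_def taylor_coeff_def)
    also have "\<dots> \<le> norm (f 0)" by (rule complex_Re_le_cmod)
    also have "\<dots> = exp (- Re (Sf N lam \<alpha> 0))" using nf by simp
    also have "\<dots> < 1"
    proof -
      have "lam 0 / (1 - 0) \<le> Re (Sf N lam \<alpha> (of_real 0 * cnj (\<alpha> 0)))"
        using N1 by (intro Sf_lower[OF _ la]) auto
      moreover have "lam 0 > 0" using la N1 by auto
      ultimately show ?thesis by simp
    qed
    finally show False by simp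
  qed
  have nconst: "\<not> f constant_on ball 0 1"
  proof
    assume "f constant_on ball 0 1"
    then obtain c where c: "\<And>z. z \<in> ball 0 1 \<Longrightarrow> f z = c" unfolding constant_on_def by blast
    have "eventually (\<lambda>t. Re (Sf N lam \<alpha> (of_real t * cnj (\<alpha> 0))) = - ln (norm c)) (at_left 1)"
      using evt
    proof eventually_elim
      case (elim t)
      then have "of_real t * cnj (\<alpha> 0) \<in> ball 0 1" using inball a0 by simp
      then have "exp (- Re (Sf N lam \<alpha> (of_real t * cnj (\<alpha> 0)))) = norm c"
        using nf c by metis
      then show ?case by (metis ln_exp minus_minus)
    qed
    then have "((\<lambda>t. Re (Sf N lam \<alpha> (of_real t * cnj (\<alpha> 0)))) \<longlongrightarrow> - ln (norm c)) (at_left 1)"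
      by (rule tendsto_eventually)
    then show False using K N1 by auto
  qed
  have no: "\<And>z. norm z < 1 \<Longrightarrow> norm (\<psi> z) < 1" using assms(4) by (auto simp: image_subset_iff)
  have psi_le: "\<And>z. norm z < 1 \<Longrightarrow> norm (\<psi> z) \<le> norm z"
    using Schwarz_Lemma(1)[OF assms(3) assms(6) no] by blast
  define g where "g z = f z - f 0" for z
  have holg: "g holomorphic_on ball 0 1" unfolding g_def using holf by (intro holomorphic_intros)
  have ncg: "\<not> g constant_on ball 0 1"
  proof
    assume "g constant_on ball 0 1"
    then obtain c where "\<And>z. z \<in> ball 0 1 \<Longrightarrow> g z = c" unfolding constant_on_def by blast
    then have "\<And>z. z \<in> ball 0 1 \<Longrightarrow> f z = c + f 0" unfolding g_def by (metis diff_add_cancel)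
    then show False using nconst unfolding constant_on_def by blast
  qed
  obtain h r m where m: "0 < m" and r: "0 < r" "ball 0 r \<subseteq> ball (0::complex) 1"
    and holh: "h holomorphic_on ball 0 r"
    and gh: "\<And>w. w \<in> ball 0 r \<Longrightarrow> g w = (w - 0)^m * h w"
    and hnz: "\<And>w. w \<in> ball 0 r \<Longrightarrow> h w \<noteq> 0"
    by (rule holomorphic_factor_zero_nonconstant[OF holg open_ball connected_ball _ _ ncg])
       (auto simp: g_def)
  have eqz: "(\<psi> z / z)^m = h z / h (\<psi> z)" if z: "z \<in> ball 0 r" "z \<noteq> 0" for z
  proof -
    have z1: "z \<in> ball 0 1" using z r by auto
    have pz: "\<psi> z \<in> ball 0 r" using psi_le[of z] z z1 by simp
    have "g (\<psi> z) = g z" unfolding g_def using assms(7) z1 by simp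
    then have "(\<psi> z)^m * h (\<psi> z) = z^m * h z" using gh pz z by simp
    then show ?thesis using hnz[OF pz] z(2) by (simp add: field_simps power_divide)
  qed
  define D where "D = deriv \<psi> 0"
  have "(\<psi> has_field_derivative D) (at 0)"
    unfolding D_def by (rule holomorphic_derivI[OF assms(3)]) auto
  then have lim1: "((\<lambda>z. \<psi> z / z) \<longlongrightarrow> D) (at 0)"
    using assms(6) by (simp add: has_field_derivative_iff)
  then have lim2: "((\<lambda>z. (\<psi> z / z)^m) \<longlongrightarrow> D^m) (at 0)" by (intro tendsto_intros)
  have ch: "isCont h 0"
    using holh r by (intro field_differentiable_imp_continuous_at holomorphic_on_imp_differentiable_at) auto
  have cp: "isCont \<psi> 0"
    using assms(3) by (intro field_differentiable_imp_continuous_at holomorphic_on_imp_differentiable_at) auto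
  have h0: "h 0 \<noteq> 0" using hnz r by auto
  have t1: "(\<psi> \<longlongrightarrow> 0) (at 0)" using cp assms(6) by (simp add: isCont_def)
  have t2: "((\<lambda>z. h (\<psi> z)) \<longlongrightarrow> h 0) (at 0)" by (rule isCont_tendsto_compose[OF ch t1])
  have t3: "(h \<longlongrightarrow> h 0) (at 0)" using ch by (simp add: isCont_def)
  have lim3: "((\<lambda>z. h z / h (\<psi> z)) \<longlongrightarrow> h 0 / h (\<psi> 0)) (at 0)"
    using tendsto_divide[OF t3 t2 h0] assms(6) by simp
  have ev1: "eventually (\<lambda>z. h z / h (\<psi> z) = (\<psi> z / z)^m) (at 0)"
    unfolding eventually_at using r eqz by (auto simp: dist_norm intro!: exI[of _ r])
  have "((\<lambda>z. (\<psi> z / z)^m) \<longlongrightarrow> h 0 / h (\<psi> 0)) (at 0)"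
    by (rule Lim_transform_eventually[OF lim3 ev1])
  then have "D^m = h 0 / h (\<psi> 0)" using lim2 by (rule LIM_unique[rotated])
  then have "D^m = 1" using h0 assms(6) by simp
  then have "norm D ^ m = 1" by (metis norm_one norm_power)
  then have nD: "norm D = 1" using m by (metis norm_ge_zero power_eq_imp_eq_base power_one zero_le_one)
  obtain \<xi> where xi: "\<And>z. norm z < 1 \<Longrightarrow> \<psi> z = \<xi> * z" and nxi: "norm \<xi> = 1"
    using Schwarz_Lemma(3)[OF assms(3) assms(6) no, of 0] nD unfolding D_def by auto
  have xi1: "\<xi> \<noteq> 1" using assms(5) xi by auto
  have fxi: "\<And>z. z \<in> ball 0 1 \<Longrightarrow> f (\<xi> * z) = f z" using xi assms(7) by auto
  have inv: "\<exists>j<N. \<alpha> j * (\<xi> * cnj (\<alpha> k)) = 1" if k: "k < N" for k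
  proof (rule ccontr)
    assume "\<not> ?thesis"
    then have nb: "\<forall>j<N. \<alpha> j * (\<xi> * cnj (\<alpha> k)) \<noteq> 1" by auto
    have ak: "norm (\<alpha> k) = 1" using la k by auto
    have nb1: "norm (\<xi> * cnj (\<alpha> k)) = 1" using ak nxi by (simp add: norm_mult)
    have ev2: "eventually (\<lambda>t. Re (Sf N lam \<alpha> (of_real t * (\<xi> * cnj (\<alpha> k)))) =
                          Re (Sf N lam \<alpha> (of_real t * cnj (\<alpha> k)))) (at_left 1)"
      using evt
    proof eventually_elim
      case (elim t)
      have i1: "of_real t * cnj (\<alpha> k) \<in> ball 0 1" using inball elim ak by simp
      have i2: "of_real t * (\<xi> * cnj (\<alpha> k)) \<in> ball 0 1" using inball elim nb1 by simp
      have "f (of_real t * (\<xi> * cnj (\<alpha> k))) = f (of_real t * cnj (\<alpha> k))"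
        using fxi[OF i1] by (simp add: algebra_simps)
      then have "exp (- Re (Sf N lam \<alpha> (of_real t * (\<xi> * cnj (\<alpha> k))))) =
                 exp (- Re (Sf N lam \<alpha> (of_real t * cnj (\<alpha> k))))"
        using nf[OF i1] nf[OF i2] by simp
      then show ?case by simp
    qed
    have lm: "((\<lambda>t. Re (Sf N lam \<alpha> (of_real t * (\<xi> * cnj (\<alpha> k))))) \<longlongrightarrow>
                     Re (Sf N lam \<alpha> (\<xi> * cnj (\<alpha> k)))) (at_left 1)"
      by (rule Sf_cont[OF nb])
    have "((\<lambda>t. Re (Sf N lam \<alpha> (of_real t * cnj (\<alpha> k)))) \<longlongrightarrow>
                     Re (Sf N lam \<alpha> (\<xi> * cnj (\<alpha> k)))) (at_left 1)"
      by (rule Lim_transform_eventually[OF lm ev2])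
    then show False using K k by blast
  qed
  define \<zeta> where "\<zeta> = cnj \<xi>"
  define A where "A = \<alpha> ` {..<N}"
  have finA: "finite A" unfolding A_def by simp
  have cardA: "card A = N" unfolding A_def using inj by (simp add: card_image)
  have zxi: "\<zeta> * \<xi> = 1" unfolding \<zeta>_def using nxi
    by (metis complex_norm_square mult.commute of_real_1 power_one)
  have z0: "\<zeta> \<noteq> 0" using zxi by auto
  have sub: "(\<lambda>a. \<zeta> * a) ` A \<subseteq> A"
  proof
    fix b assume "b \<in> (\<lambda>a. \<zeta> * a) ` A"
    then obtain k where k: "k < N" and b: "b = \<zeta> * \<alpha> k" unfolding A_def by auto
    obtain j where j: "j < N" and e: "\<alpha> j * (\<xi> * cnj (\<alpha> k)) = 1" using inv[OF k] by blast
    have akk: "cnj (\<alpha> k) * \<alpha> k = 1" using la k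
      by (metis complex_norm_square mult.commute of_real_1 power_one)
    have "\<alpha> j = \<alpha> j * (\<xi> * cnj (\<alpha> k)) * (\<zeta> * \<alpha> k)"
    proof -
      have "\<alpha> j * (\<xi> * cnj (\<alpha> k)) * (\<zeta> * \<alpha> k) = \<alpha> j * (\<zeta> * \<xi>) * (cnj (\<alpha> k) * \<alpha> k)"
        by (simp add: algebra_simps)
      then show ?thesis using zxi akk by simp
    qed
    then have "\<alpha> j = b" using e b by simp
    then show "b \<in> A" unfolding A_def using j by auto
  qed
  have injz: "inj_on (\<lambda>a. \<zeta> * a) A" using z0 by (auto simp: inj_on_def)
  have imA: "(\<lambda>a. \<zeta> * a) ` A = A" by (rule endo_inj_surj[OF finA sub injz])
  have "prod (\<lambda>a. a) A = prod (\<lambda>a. a) ((\<lambda>a. \<zeta> * a) ` A)" using imA by simp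
  also have "\<dots> = prod (\<lambda>a. \<zeta> * a) A" using prod.reindex[OF injz, of "\<lambda>a. a"] by simp
  also have "\<dots> = \<zeta> ^ N * prod (\<lambda>a. a) A" using cardA by (simp add: prod.distrib)
  finally have pe: "prod (\<lambda>a. a) A = \<zeta> ^ N * prod (\<lambda>a. a) A" .
  have "prod (\<lambda>a. a) A \<noteq> 0"
    using finA la unfolding A_def by (auto simp: prod_zero_iff)
  then have "\<zeta> ^ N = 1" using pe by simp
  then have xiN: "\<xi> ^ N = 1" unfolding \<zeta>_def by (metis complex_cnj_cnj complex_cnj_one complex_cnj_power)
  have xin: "\<xi> ^ n = 1"
  proof (rule ccontr)
    assume ne: "\<xi> ^ n \<noteq> 1"
    have mb: "\<And>w. w \<in> ball 0 1 \<Longrightarrow> \<xi> * w \<in> ball 0 1" using nxi by (simp add: norm_mult)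
    have hc: "(\<lambda>w. f (\<xi> * w)) holomorphic_on ball 0 1"
    proof -
      have im: "(\<lambda>w. \<xi> * w) ` ball 0 1 \<subseteq> ball 0 1" using mb by auto
      have "(\<lambda>w. \<xi> * w) holomorphic_on ball 0 1" by (intro holomorphic_intros)
      from holomorphic_on_compose_gen[OF this holf im] show ?thesis by (simp add: o_def)
    qed
    have "(deriv ^^ n) (\<lambda>w. f (\<xi> * w)) 0 = \<xi>^n * (deriv ^^ n) f (\<xi> * 0)"
      by (rule higher_deriv_compose_linear[where S="ball 0 1" and T="ball 0 1"]) (use holf mb in auto)
    moreover have "(deriv ^^ n) (\<lambda>w. f (\<xi> * w)) 0 = (deriv ^^ n) f 0"
      by (rule higher_deriv_transform_within_open[OF hc holf open_ball]) (use fxi in auto)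
    ultimately have "(\<xi>^n - 1) * (deriv ^^ n) f 0 = 0" by (simp add: algebra_simps)
    then have "(deriv ^^ n) f 0 = 0" using ne by simp
    then have "M n f = 0" by (simp add: M_def taylor_coeff_def)
    moreover have "M n (\<lambda>z::complex. (1 + z^n)/2) \<le> M n f" using ext F_B0(1)[OF n1] by blast
    ultimately show False using F_B0(2)[OF n1] by simp
  qed
  obtain x y where bz: "N * x = n * y + gcd N n" using bezout_nat[of N n] N1 by auto
  have "\<xi> ^ (N * x) = \<xi> ^ (n * y) * \<xi> ^ gcd N n" using bz by (simp add: power_add)
  then have "\<xi> ^ gcd N n = 1" using xiN xin by (simp add: power_mult)
  then have "gcd N n \<noteq> 1" using xi1 by auto
  moreover have "gcd N n \<noteq> 0" using N1 by auto
  ultimately have "gcd N n > 1" by linarith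
  moreover have "\<forall>z\<in>ball 0 1. \<psi> z = \<xi> * z" using xi by auto
  ultimately show ?thesis using nxi by blast
qed

end
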